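(* Let $1\le l\le g$. The power series $Q^l(x_2,\dots,x_{n-1})$ has coefficients in $\mathbb Z_p^n$ and converges uniformly on $D_{0,1}^{n-2}=(p\mathbb Z_p)^{n-2}$, and the sequence of polynomial functions $Q^{l,s}(x_2,\dots,x_{n-1})$, $s=1,2,\dots$, converges uniformly on $D_{0,1}^{n-2}$ to $Q^l(x_2,\dots,x_{n-1})$.
   Context: Let $p$ be an odd prime, $g\ge1$, $n=2g+1$, $p>n$. $\mathbb Z_p$, $\mathbb Q_p$, $|\cdot|_p$ as usual; $D_{0,1}=\{t\in\mathbb Z_p:|t|_p<1\}$; uniform convergence on $S$ means convergence in $\sup_{S}|\cdot|_p$ (coordinatewise). Binomials $\binom{y}{k}=y(y-1)\cdots(y-k+1)/k!$. Fix $1\le l\le g$. For $a=(a_1,\dots,a_{n-1})$ write $X(a)=\prod_{i=2}^{n-2l}x_i^{a_{i-1}}\prod_{i=n-2l+1}^{n-1}x_i^{a_i}$. For a parameter $\mu$ define $Q^{l}[\mu]=(Q_1,\dots,Q_n)$ by: for $1\le j\le n-2l-1$: $Q_j=x_{j+1}\sum\binom{\mu-1}{a_j}\prod_{i\ne j}\binom{\mu}{a_i}X(a)$ over $a$ with $a_1+\dots+a_{n-2l}=a_{n-2l+1}+\dots+a_{n-1}+l-1$; for $j=n-2l$: $Q_j=\sum\binom{\mu-1}{a_j}\prod_{i\ne j}\binom{\mu}{a_i}X(a)$ with the same condition ($l-1$); for $n-2l<j\le n-1$: $Q_j=\sum\binom{\mu-1}{a_j}\prod_{i\ne j}\binom{\mu}{a_i}X(a)$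 over $a$ with $a_1+\dots+a_{n-2l}=a_{n-2l+1}+\dots+a_{n-1}+l$; $Q_n=\sum\prod_{i=1}^{n-1}\binom{\mu}{a_i}X(a)$ over $a$ with $a_1+\dots+a_{n-2l}=a_{n-2l+1}+\dots+a_{n-1}+l$. Here $\prod_{i\ne j}$ is over $i\in\{1,\dots,n-1\}\setminus\{j\}$. Then $Q^l$ is the formal power series $Q^l[-\tfrac12]$ in $x_2,\dots,x_{n-1}$ (sum over all $a\in\mathbb Z_{\ge0}^{n-1}$), and $Q^{l,s}$ is the polynomial $Q^l[\tfrac{p^s-1}2]$ (sum over $a$ with $0\le a_i\le\frac{p^s-1}2$). *)

theory Defs
  imports "HOL-Number_Theory.Number_Theory"
begin

text \<open>An element of Z_p is represented canonically by the sequence of its residues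
  modulo p^k, k = 0,1,2,...\<close>

definition Zp :: "int \<Rightarrow> (nat \<Rightarrow> int) set" where
  "Zp p = {f. \<forall>k. f k \<in> {0..<p ^ k} \<and> f (Suc k) mod p ^ k = f k}"

text \<open>Ring operations are computed levelwise (reduction mod p^k is a ring morphism).\<close>

definition padd :: "int \<Rightarrow> (nat \<Rightarrow> int) \<Rightarrow> (nat \<Rightarrow> int) \<Rightarrow> (nat \<Rightarrow> int)" where
  "padd p x y = (\<lambda>k. (x k + y k) mod p ^ k)"

definition pmul :: "int \<Rightarrow> (nat \<Rightarrow> int) \<Rightarrow> (nat \<Rightarrow> int) \<Rightarrow> (nat \<Rightarrow> int)" where
  "pmul p x y = (\<lambda>k. (x k * y k) mod p ^ k)"

definition ppow :: "int \<Rightarrow> (nat \<Rightarrow> int) \<Rightarrow> nat \<Rightarrow> (nat \<Rightarrow> int)" where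
  "ppow p x m = (\<lambda>k. (x k ^ m) mod p ^ k)"

definition psum :: "int \<Rightarrow> ('a \<Rightarrow> nat \<Rightarrow> int) \<Rightarrow> 'a set \<Rightarrow> (nat \<Rightarrow> int)" where
  "psum p f A = (\<lambda>k. (\<Sum>a\<in>A. f a k) mod p ^ k)"

definition pprod :: "int \<Rightarrow> ('a \<Rightarrow> nat \<Rightarrow> int) \<Rightarrow> 'a set \<Rightarrow> (nat \<Rightarrow> int)" where
  "pprod p f A = (\<lambda>k. (\<Prod>a\<in>A. f a k) mod p ^ k)"

definition pint :: "int \<Rightarrow> int \<Rightarrow> (nat \<Rightarrow> int)" where
  "pint p m = (\<lambda>k. m mod p ^ k)"

definition p_integral :: "int \<Rightarrow> rat \<Rightarrow> bool" where
  "p_integral p r \<longleftrightarrow> \<not> p dvd snd (quotient_of r)"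

definition prat :: "int \<Rightarrow> rat \<Rightarrow> (nat \<Rightarrow> int)" where
  "prat p r = (\<lambda>k. SOME y. y \<in> {0..<p ^ k} \<and>
      [y * snd (quotient_of r) = fst (quotient_of r)] (mod p ^ k))"

definition pdist :: "int \<Rightarrow> (nat \<Rightarrow> int) \<Rightarrow> (nat \<Rightarrow> int) \<Rightarrow> real" where
  "pdist p x y = (if x = y then 0
      else inverse (real_of_int p ^ (LEAST k. x (Suc k) \<noteq> y (Suc k))))"

definition pabs :: "int \<Rightarrow> (nat \<Rightarrow> int) \<Rightarrow> real" where
  "pabs p x = pdist p x (pint p 0)"

definition Dpoly :: "int \<Rightarrow> nat \<Rightarrow> (nat \<Rightarrow> nat \<Rightarrow> int) set" where
  "Dpoly p n = {x. \<forall>i\<in>{2..n-1}. x i \<in> Zp p \<and> pabs p (x i) < 1}"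

definition Idx :: "nat \<Rightarrow> (nat \<Rightarrow> nat) set" where
  "Idx n = {a. \<forall>i. i \<notin> {1..n-1} \<longrightarrow> a i = 0}"

definition IdxB :: "nat \<Rightarrow> nat \<Rightarrow> (nat \<Rightarrow> nat) set" where
  "IdxB n M = {a \<in> Idx n. \<forall>i. a i \<le> M}"

definition Qcond :: "nat \<Rightarrow> nat \<Rightarrow> nat \<Rightarrow> (nat \<Rightarrow> nat) \<Rightarrow> bool" where
  "Qcond n l j a \<longleftrightarrow>
     (\<Sum>i=1..n-2*l. a i) = (\<Sum>i=n-2*l+1..n-1. a i) + (if j \<le> n - 2*l then l - 1 else l)"

definition Qcoef :: "nat \<Rightarrow> nat \<Rightarrow> rat \<Rightarrow> nat \<Rightarrow> (nat \<Rightarrow> nat) \<Rightarrow> rat" where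
  "Qcoef n l \<mu> j a = (if Qcond n l j a then
      (if j \<le> n - 1 then ((\<mu> - 1) gchoose a j) * (\<Prod>i\<in>{1..n-1} - {j}. \<mu> gchoose a i)
       else (\<Prod>i\<in>{1..n-1}. \<mu> gchoose a i))
    else 0)"

definition Qexp :: "nat \<Rightarrow> nat \<Rightarrow> nat \<Rightarrow> (nat \<Rightarrow> nat) \<Rightarrow> nat \<Rightarrow> nat" where
  "Qexp n l j a i =
     (if 2 \<le> i \<and> i \<le> n - 2*l then a (i - 1)
      else if n - 2*l < i \<and> i \<le> n - 1 then a i else 0)
     + (if 1 \<le> j \<and> j + 1 \<le> n - 2*l \<and> i = j + 1 then 1 else 0)"

definition Qterm :: "int \<Rightarrow> nat \<Rightarrow> nat \<Rightarrow> rat \<Rightarrow> nat \<Rightarrow> (nat \<Rightarrow> nat \<Rightarrow> int)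
    \<Rightarrow> (nat \<Rightarrow> nat) \<Rightarrow> (nat \<Rightarrow> int)" where
  "Qterm p n l \<mu> j x a =
     pmul p (prat p (Qcoef n l \<mu> j a))
       (pprod p (\<lambda>i. ppow p (x i) (Qexp n l j a i)) {2..n-1})"

text \<open>Uniform (unconditional) convergence on D of the series sum_{a in I} T a x to F x:
  the finite partial sums converge uniformly along the net of finite subsets of I.\<close>

definition unif_series_conv :: "int \<Rightarrow> 'a set \<Rightarrow> ('a \<Rightarrow> 'b \<Rightarrow> nat \<Rightarrow> int)
    \<Rightarrow> 'b set \<Rightarrow> ('b \<Rightarrow> nat \<Rightarrow> int) \<Rightarrow> bool" where
  "unif_series_conv p I T D F \<longleftrightarrow>
     (\<forall>\<epsilon>>0. \<exists>A0. finite A0 \<and> A0 \<subseteq> I \<and>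
        (\<forall>A. finite A \<and> A0 \<subseteq> A \<and> A \<subseteq> I \<longrightarrow>
           (\<forall>x\<in>D. pdist p (psum p (\<lambda>a. T a x) A) (F x) < \<epsilon>)))"

end

theory Submission
  imports Defs
begin


definition pI :: "int \<Rightarrow> nat \<Rightarrow> rat \<Rightarrow> bool" where
  "pI p s r \<longleftrightarrow> (\<exists>a b. \<not> p dvd b \<and> r = of_int (p^s * a) / of_int b)"

lemma pI_intro: "\<not> p dvd b \<Longrightarrow> r = of_int (p^s * a) / of_int b \<Longrightarrow> pI p s r"
  unfolding pI_def by blast

lemma pI_add:
  assumes "prime p" "pI p s r" "pI p s r'" shows "pI p s (r + r')"
proof -
  obtain a b where ab: "\<not> p dvd b" "r = of_int (p^s * a) / of_int b" using assms(2) pI_def by blast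
  obtain a' b' where ab': "\<not> p dvd b'" "r' = of_int (p^s * a') / of_int b'" using assms(3) pI_def by blast
  have b0: "b \<noteq> 0" "b' \<noteq> 0" using ab ab' by auto
  have "\<not> p dvd b * b'" using ab ab' assms(1) prime_dvd_mult_iff by blast
  moreover have "r + r' = of_int (p^s * (a*b' + a'*b)) / of_int (b*b')"
  proof -
    have "r + r' = (of_int (p^s*a) * of_int b' + of_int (p^s*a') * of_int b) / (of_int b * of_int b')"
      using b0 by (simp add: ab ab' add_frac_eq)
    also have "\<dots> = of_int (p^s * (a*b' + a'*b)) / of_int (b*b')" by (simp add: algebra_simps)
    finally show ?thesis .
  qed
  ultimately show ?thesis by (rule pI_intro)
qed

lemma pI_neg:
  assumes "pI p s r" shows "pI p s (- r)"
proof -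
  obtain a b where ab: "\<not> p dvd b" "r = of_int (p^s * a) / of_int b" using assms pI_def by blast
  have "- r = of_int (p^s * (-a)) / of_int b" by (simp add: ab)
  thus ?thesis by (rule pI_intro[OF ab(1)])
qed

lemma pI_diff:
  assumes "prime p" "pI p s r" "pI p s r'" shows "pI p s (r - r')"
  using pI_add[OF assms(1,2) pI_neg[OF assms(3)]] by simp

lemma pI_mult:
  assumes "prime p" "pI p s r" "pI p t r'" shows "pI p (s+t) (r * r')"
proof -
  obtain a b where ab: "\<not> p dvd b" "r = of_int (p^s * a) / of_int b" using assms(2) pI_def by blast
  obtain a' b' where ab': "\<not> p dvd b'" "r' = of_int (p^t * a') / of_int b'" using assms(3) pI_def by blast
  have "\<not> p dvd b * b'" using ab ab' assms(1) prime_dvd_mult_iff by blast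
  moreover have "r * r' = of_int (p^(s+t) * (a*a')) / of_int (b*b')"
    by (simp add: ab ab' power_add mult_ac)
  ultimately show ?thesis by (rule pI_intro)
qed

lemma pI_mono:
  assumes "t \<le> s" "pI p s r" shows "pI p t r"
proof -
  obtain a b where ab: "\<not> p dvd b" "r = of_int (p^s * a) / of_int b" using assms(2) pI_def by blast
  have "p^s = p^t * p^(s-t)" using assms(1) by (metis le_add_diff_inverse power_add)
  hence "p^s * a = p^t * (p^(s-t) * a)" by (simp only: mult.assoc)
  hence "r = of_int (p^t * (p^(s-t) * a)) / of_int b" using ab by (simp only:)
  thus ?thesis by (rule pI_intro[OF ab(1)])
qed

lemma pI_int: assumes "prime p" shows "pI p 0 (of_int z)"
proof -
  have "\<not> p dvd 1" using assms not_prime_unit by blast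
  moreover have "of_int z = (of_int (p^0 * z) / of_int 1 :: rat)" by simp
  ultimately show ?thesis by (rule pI_intro)
qed

lemma pI_0: assumes "prime p" shows "pI p s 0"
proof -
  have "\<not> p dvd 1" using assms not_prime_unit by blast
  moreover have "(0::rat) = of_int (p^s * 0) / of_int 1" by simp
  ultimately show ?thesis by (rule pI_intro)
qed

lemma pI_nat: assumes "prime p" shows "pI p 0 (of_nat z)"
  using pI_int[OF assms, of "int z"] by simp

lemma pI0_iff:
  assumes "prime p" shows "pI p 0 r \<longleftrightarrow> p_integral p r"
proof
  assume "pI p 0 r"
  then obtain a b where ab: "\<not> p dvd b" "r = of_int a / of_int b" unfolding pI_def by auto
  obtain u d where ud: "quotient_of r = (u, d)" by (cases "quotient_of r") auto
  have r: "r = of_int u / of_int d" using quotient_of_div[OF ud] .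
  have d0: "d > 0" using quotient_of_denom_pos[OF ud] .
  have cop: "coprime u d" using quotient_of_coprime[OF ud] .
  have b0: "b \<noteq> 0" using ab by auto
  have "of_int a / of_int b = (of_int u / of_int d :: rat)" using ab r by simp
  hence "of_int (a * d) = (of_int (u * b) :: rat)" using b0 d0 by (simp add: field_simps)
  hence e: "a * d = u * b" by (simp only: of_int_eq_iff)
  hence "d dvd u * b" by (metis dvd_triv_right)
  hence "d dvd b" using cop by (metis coprime_commute coprime_dvd_mult_right_iff)
  hence "\<not> p dvd d" using ab(1) dvd_trans by blast
  thus "p_integral p r" unfolding p_integral_def using ud by simp
next
  assume "p_integral p r"
  obtain u d where ud: "quotient_of r = (u, d)" by (cases "quotient_of r") auto
  have "\<not> p dvd d" using \<open>p_integral p r\<close> ud unfolding p_integral_def by simp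
  moreover have "r = of_int (p^0 * u) / of_int d" using quotient_of_div[OF ud] by simp
  ultimately show "pI p 0 r" by (rule pI_intro)
qed

lemma int_factor_p:
  fixes x p :: int
  assumes "prime p" "x \<noteq> 0"
  shows "\<exists>v m. x = p^v * m \<and> \<not> p dvd m"
  using assms(2)
proof (induction "nat \<bar>x\<bar>" arbitrary: x rule: less_induct)
  case less
  show ?case
  proof (cases "p dvd x")
    case False
    then show ?thesis by (intro exI[of _ 0] exI[of _ x]) simp
  next
    case True
    then obtain y where y: "x = p * y" by blast
    have p1: "\<bar>p\<bar> > 1" using assms(1) prime_int_iff by auto
    have y0: "y \<noteq> 0" using y less.prems by auto
    have ax: "\<bar>x\<bar> = \<bar>p\<bar> * \<bar>y\<bar>" by (simp add: y abs_mult)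
    have "1 * \<bar>y\<bar> < \<bar>p\<bar> * \<bar>y\<bar>" using p1 y0 by (intro mult_strict_right_mono) auto
    hence "\<bar>y\<bar> < \<bar>x\<bar>" using ax by simp
    have "\<exists>v m. y = p^v * m \<and> \<not> p dvd m" by (rule less.hyps) (use \<open>\<bar>y\<bar> < \<bar>x\<bar>\<close> y0 in auto)
    then obtain v m where "y = p^v * m" "\<not> p dvd m" by blast
    then show ?thesis using y by (intro exI[of _ "Suc v"] exI[of _ m]) simp
  qed
qed

lemma pI_div:
  assumes "prime p" "pI p s D" "x = p^v * m" "\<not> p dvd m" "v \<le> s"
  shows "pI p (s - v) (D / of_int x)"
proof -
  obtain a b where ab: "\<not> p dvd b" "D = of_int (p^s * a) / of_int b" using assms(2) pI_def by blast
  have "\<not> p dvd b * m" using ab assms prime_dvd_mult_iff by blast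
  have p0: "p \<noteq> 0" using assms(1) by auto
  have "p^s = p^(s-v) * p^v" using assms(5) by (metis le_add_diff_inverse2 power_add)
  hence e2: "p^s * a = (p^(s-v) * a) * p^v" by (simp only: mult_ac)
  have pv0: "p^v \<noteq> 0" using p0 by simp
  have gen: "\<And>q pv::int. pv \<noteq> 0 \<Longrightarrow> b \<noteq> 0 \<Longrightarrow> m \<noteq> 0 \<Longrightarrow>
      of_int (q*pv) / of_int b / of_int (pv*m) = (of_int q / of_int (b*m) :: rat)"
    by (simp add: field_simps)
  have bm: "b \<noteq> 0" "m \<noteq> 0" using ab(1) assms(4) by auto
  have "D / of_int x = of_int ((p^(s-v) * a) * p^v) / of_int b / of_int (p^v * m)"
    using ab(2) e2 assms(3) by (simp only:)
  also have "\<dots> = of_int (p^(s-v) * a) / of_int (b*m)" using gen[OF pv0 bm] .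
  finally have "D / of_int x = of_int (p^(s-v) * a) / of_int (b*m)" .
  thus ?thesis by (rule pI_intro[OF \<open>\<not> p dvd b * m\<close>])
qed




lemma Zp_mod:
  assumes "p > 0" "f \<in> Zp p" "k \<le> m" shows "f m mod p^k = f k"
  using assms(3)
proof (induction m)
  case 0
  have "f 0 \<in> {0..<p^0}" using assms(2) unfolding Zp_def by blast
  then show ?case using 0 by simp
next
  case (Suc m)
  show ?case
  proof (cases "k = Suc m")
    case True
    have "f (Suc m) \<in> {0..<p^Suc m}" using assms(2) unfolding Zp_def by blast
    then show ?thesis using True by (simp del: power_Suc)
  next
    case False
    hence km: "k \<le> m" using Suc by auto
    have "f (Suc m) mod p^k = f (Suc m) mod p^m mod p^k"
      using km by (simp add: mod_mod_cancel le_imp_power_dvd)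
    also have "\<dots> = f m mod p^k" using assms(2) unfolding Zp_def by auto
    finally show ?thesis using Suc.IH km by simp
  qed
qed

lemma prime_gt1: "prime (p::int) \<Longrightarrow> p > 1"
  using prime_gt_1_int by blast

lemma coprime_pk:
  fixes p b :: int
  assumes "prime p" "\<not> p dvd b" shows "coprime (p^k) b"
  using prime_imp_coprime[OF assms] by simp

context
  fixes p :: int and r :: rat and u d :: int and k :: nat
  assumes p: "prime p" and r: "pI p 0 r" and ud: "quotient_of r = (u, d)"
begin

lemma ud_props: "\<not> p dvd d" "r = of_int u / of_int d" "d > 0"
proof -
  show "\<not> p dvd d" using r ud pI0_iff[OF p] unfolding p_integral_def by simp
  show "r = of_int u / of_int d" using quotient_of_div[OF ud] .
  show "d > 0" using quotient_of_denom_pos[OF ud] .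
qed

lemma claim1:
  assumes "pI p k (r - of_int y)" shows "[y * d = u] (mod p^k)"
proof -
  obtain a b where ab: "\<not> p dvd b" "r - of_int y = of_int (p^k * a) / of_int b"
    using assms unfolding pI_def by blast
  have b0: "b \<noteq> 0" using ab by auto
  have d0: "d \<noteq> 0" using ud_props by auto
  have gen: "\<And>A B C D E :: rat. B \<noteq> 0 \<Longrightarrow> D \<noteq> 0 \<Longrightarrow> A / B - C = E / D \<Longrightarrow> (A - C*B) * D = E * B"
    by (simp add: field_simps)
  have "of_int u / of_int d - of_int y = (of_int (p^k * a) / of_int b :: rat)"
    using ab ud_props by simp
  from gen[OF _ _ this] have "(of_int u - of_int y * of_int d) * of_int b = (of_int (p^k * a) * of_int d :: rat)"
    using b0 d0 by simp
  hence "(u - y * d) * b = p^k * a * d"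
    by (metis of_int_eq_iff of_int_diff of_int_mult)
  hence "p^k dvd (u - y * d) * b" by (metis dvd_triv_left mult.assoc)
  hence "p^k dvd (u - y * d)" using coprime_pk[OF p ab(1)] coprime_dvd_mult_left_iff by blast
  hence "p^k dvd (y * d - u)" by (metis dvd_minus_iff minus_diff_eq)
  thus ?thesis by (simp add: cong_iff_dvd_diff)
qed

lemma claim2:
  assumes "[y * d = u] (mod p^k)" shows "pI p k (r - of_int y)"
proof -
  have "p^k dvd (y * d - u)" using assms by (simp add: cong_iff_dvd_diff)
  hence "p^k dvd (u - y * d)" by (metis dvd_minus_iff minus_diff_eq)
  then obtain t where t: "u - y * d = p^k * t" by blast
  have d0: "d \<noteq> 0" using ud_props by auto
  have gen: "\<And>A C D :: rat. D \<noteq> 0 \<Longrightarrow> A / D - C = (A - C * D) / D"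
    by (simp add: field_simps)
  have "r - of_int y = (of_int u - of_int y * of_int d) / of_int d"
    using ud_props(2) gen d0 by simp
  also have "\<dots> = of_int (p^k * t) / of_int d"
    by (metis t of_int_diff of_int_mult)
  finally show ?thesis by (rule pI_intro[OF ud_props(1)])
qed

lemma claim3:
  assumes "y \<in> {0..<p^k}" "[y * d = u] (mod p^k)" "y' \<in> {0..<p^k}" "[y' * d = u] (mod p^k)"
  shows "y = y'"
proof -
  have "[y * d = y' * d] (mod p^k)" using assms(2,4) by (metis cong_sym cong_trans)
  hence "p^k dvd (y - y') * d" by (simp add: cong_iff_dvd_diff algebra_simps)
  hence "p^k dvd (y - y')" using coprime_pk[OF p ud_props(1)] coprime_dvd_mult_left_iff by blast
  hence "[y = y'] (mod p^k)" by (simp add: cong_iff_dvd_diff)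
  hence "y mod p^k = y' mod p^k" by (simp add: cong_def)
  thus ?thesis using assms(1,3) by simp
qed

lemma claim_ex: "\<exists>y. y \<in> {0..<p^k} \<and> [y * d = u] (mod p^k)"
proof -
  have "coprime d (p^k)" using coprime_pk[OF p ud_props(1)] by (simp add: coprime_commute)
  then obtain w where w: "[d * w = 1] (mod p^k)" using cong_solve_coprime_int by blast
  have pk: "p^k > 0" using prime_gt1[OF p] by simp
  let ?y = "(u * w) mod p^k"
  have "[?y * d = u * w * d] (mod p^k)" by (simp add: cong_def mod_mult_left_eq)
  moreover have "[u * w * d = u * 1] (mod p^k)"
    using cong_mult[OF cong_refl[of u] w] by (simp add: ac_simps)
  ultimately have "[?y * d = u] (mod p^k)" using cong_trans by simp
  moreover have "?y \<in> {0..<p^k}" using pk by simp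
  ultimately show ?thesis by blast
qed

lemma prat_is: "prat p r k = (SOME y. y \<in> {0..<p^k} \<and> [y * d = u] (mod p^k))"
  unfolding prat_def using ud by simp

lemma prat_spec': "prat p r k \<in> {0..<p^k} \<and> [prat p r k * d = u] (mod p^k)"
  unfolding prat_is using someI_ex[OF claim_ex] .

end

lemma prat_spec:
  assumes "prime p" "pI p 0 r"
  shows "prat p r k \<in> {0..<p^k}" "pI p k (r - of_int (prat p r k))"
proof -
  obtain u d where ud: "quotient_of r = (u, d)" by (cases "quotient_of r") auto
  show "prat p r k \<in> {0..<p^k}" using prat_spec'[OF assms ud] by blast
  show "pI p k (r - of_int (prat p r k))" using prat_spec'[OF assms ud] claim2[OF assms ud] by blast
qed

lemma prat_char:
  assumes "prime p" "pI p 0 r" "y \<in> {0..<p^k}" "pI p k (r - of_int y)"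
  shows "prat p r k = y"
proof -
  obtain u d where ud: "quotient_of r = (u, d)" by (cases "quotient_of r") auto
  show ?thesis using prat_spec'[OF assms(1,2) ud] claim1[OF assms(1,2) ud assms(4)]
      claim3[OF assms(1,2) ud] assms(3) by blast
qed

lemma prat_cong:
  assumes "prime p" "pI p 0 r" "pI p 0 r'" "pI p k (r - r')"
  shows "prat p r k = prat p r' k"
proof -
  have "pI p k ((r - r') + (r' - of_int (prat p r' k)))"
    using pI_add[OF assms(1,4) prat_spec(2)[OF assms(1,3)]] .
  hence "pI p k (r - of_int (prat p r' k))" by simp
  thus ?thesis using prat_char[OF assms(1,2) prat_spec(1)[OF assms(1,3)]] by blast
qed

lemma prat_int:
  assumes "prime p" shows "prat p (of_int z) k = z mod p^k"
proof (rule prat_char[OF assms pI_int[OF assms]])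
  have pk: "p^k > 0" using prime_gt1[OF assms] by simp
  show "z mod p ^ k \<in> {0..<p ^ k}" using pk by simp
  have "z - z mod p^k = p^k * (z div p^k)" by (simp add: minus_mod_eq_mult_div)
  hence "of_int z - of_int (z mod p^k) = (of_int (p^k * (z div p^k)) / of_int 1 :: rat)"
    by (metis div_by_1 of_int_1 of_int_diff)
  thus "pI p k (of_int z - of_int (z mod p ^ k))"
    by (rule pI_intro[rotated]) (use assms not_prime_unit in blast)
qed

lemma prat_zero:
  assumes "prime p" shows "prat p 0 k = 0"
  using prat_int[OF assms, of 0] by simp

lemma prat_Zp:
  assumes "prime p" "pI p 0 r" shows "prat p r \<in> Zp p"
  unfolding Zp_def mem_Collect_eq
proof (intro allI conjI)
  fix k
  show "prat p r k \<in> {0..<p^k}" using prat_spec(1)[OF assms] .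
  let ?y = "prat p r (Suc k)"
  have pk: "p^k > 0" using prime_gt1[OF assms(1)] by simp
  have h1: "pI p k (r - of_int ?y)"
    using pI_mono[OF _ prat_spec(2)[OF assms, of "Suc k"]] by simp
  have "?y - ?y mod p^k = p^k * (?y div p^k)" by (simp add: minus_mod_eq_mult_div)
  hence "of_int ?y - of_int (?y mod p^k) = (of_int (p^k * (?y div p^k)) / of_int 1 :: rat)"
    by (metis div_by_1 of_int_1 of_int_diff)
  hence h2: "pI p k (of_int ?y - of_int (?y mod p^k))"
    by (rule pI_intro[rotated]) (use assms not_prime_unit in blast)
  have "pI p k ((r - of_int ?y) + (of_int ?y - of_int (?y mod p^k)))"
    by (rule pI_add[OF assms(1) h1 h2])
  hence "pI p k (r - of_int (?y mod p^k))" by simp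
  moreover have "?y mod p^k \<in> {0..<p^k}" using pk by simp
  ultimately show "?y mod p^k = prat p r k"
    using prat_char[OF assms] by metis
qed




lemma pI_prod:
  assumes "prime p" "finite S" "\<forall>i\<in>S. pI p 0 (f i)"
  shows "pI p 0 (\<Prod>i\<in>S. f i)"
  using assms(2,3)
proof (induction S rule: finite_induct)
  case empty then show ?case using pI_int[OF assms(1), of 1] by simp
next
  case (insert x F)
  then show ?case using pI_mult[OF assms(1), of 0 "f x" 0] by simp
qed

lemma pI_prod_diff:
  assumes "prime p" "finite S" "\<forall>i\<in>S. pI p 0 (f i) \<and> pI p 0 (g i) \<and> pI p s (f i - g i)"
  shows "pI p s ((\<Prod>i\<in>S. f i) - (\<Prod>i\<in>S. g i))"
  using assms(2,3)
proof (induction S rule: finite_induct)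
  case empty then show ?case using pI_0[OF assms(1)] by simp
next
  case (insert x F)
  have fx: "pI p 0 (f x)" "pI p 0 (g x)" "pI p s (f x - g x)" using insert by auto
  have IH: "pI p s (prod f F - prod g F)" using insert by auto
  have PF: "pI p 0 (prod f F)" using pI_prod[OF assms(1) insert(1)] insert(4) by auto
  have e: "prod f (insert x F) - prod g (insert x F) = (f x - g x) * prod f F + g x * (prod f F - prod g F)"
    using insert(1,2) by (simp add: algebra_simps)
  have "pI p (s+0) ((f x - g x) * prod f F)" by (rule pI_mult[OF assms(1) fx(3) PF])
  moreover have "pI p (0+s) (g x * (prod f F - prod g F))" by (rule pI_mult[OF assms(1) fx(2) IH])
  ultimately show ?case unfolding e using pI_add[OF assms(1)] by simp
qed

lemma binom_diff:
  assumes p: "prime p" and y: "pI p 0 y" and y': "pI p 0 y'" and d: "pI p t (y' - y)"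
    and jt: "fact j \<le> t"
  shows "pI p (t - fact j) ((y' gchoose j) - (y gchoose j))"
proof -
  have D: "pI p t ((\<Prod>i=0..<j. y' - of_nat i) - (\<Prod>i=0..<j. y - of_nat i))"
  proof (rule pI_prod_diff[OF p])
    show "\<forall>i\<in>{0..<j}. pI p 0 (y' - of_nat i) \<and> pI p 0 (y - of_nat i) \<and> pI p t (y' - of_nat i - (y - of_nat i))"
      using pI_diff[OF p y' pI_nat[OF p]] pI_diff[OF p y pI_nat[OF p]] d by simp
  qed simp
  have fj: "(fact j :: int) \<noteq> 0" by simp
  obtain v m where vm: "(fact j :: int) = p^v * m" "\<not> p dvd m" using int_factor_p[OF p fj] by blast
  have "p^v dvd (fact j :: int)" using vm by simp
  hence "p^v \<le> (fact j :: int)" by (rule zdvd_imp_le) simp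
  moreover have "int v < 2^v" using less_exp[of v] by (metis of_nat_less_iff of_nat_numeral of_nat_power)
  moreover have "(2::int)^v \<le> p^v" using prime_gt1[OF p] by (intro power_mono) auto
  ultimately have "int v < fact j" by linarith
  hence vle: "v \<le> fact j" by (metis of_nat_fact of_nat_less_iff less_imp_le)
  have e: "(y' gchoose j) - (y gchoose j) = ((\<Prod>i=0..<j. y' - of_nat i) - (\<Prod>i=0..<j. y - of_nat i)) / of_int (fact j)"
    by (simp add: gbinomial_mult_fact'[symmetric] diff_divide_distrib)
  have "pI p (t - v) ((y' gchoose j) - (y gchoose j))"
    unfolding e by (rule pI_div[OF p D vm(1) vm(2)]) (use vle jt in linarith)
  thus ?thesis by (rule pI_mono[rotated]) (use vle in linarith)
qed

definition Mv :: "int \<Rightarrow> nat \<Rightarrow> nat" where "Mv p s = nat ((p^s - 1) div 2)"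

context
  fixes p :: int
  assumes p: "prime p" and odd: "odd p"
begin

lemma p3: "p \<ge> 3"
proof -
  have "p \<ge> 2" using prime_gt1[OF p] by simp
  moreover have "p \<noteq> 2" using odd by auto
  ultimately show ?thesis by simp
qed

lemma Mv_rat: "(of_nat (Mv p s) :: rat) = (of_int (p^s) - 1) / 2"
proof -
  have "odd (p^s)" using odd by simp
  then obtain q where q: "p^s = 2*q + 1" by (metis oddE)
  have "p^s > 0" using p3 by simp
  hence q0: "q \<ge> 0" using q by simp
  have "Mv p s = nat q" unfolding Mv_def q by simp
  thus ?thesis using q q0 by simp
qed

lemma Mv_ge: "Mv p s \<ge> s"
proof -
  have "(3::int)^s \<ge> 2 * int s + 1" by (induction s) auto
  moreover have "(3::int)^s \<le> p^s" using p3 by (intro power_mono) auto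
  ultimately have "p^s \<ge> 2 * int s + 1" by simp
  hence "(p^s - 1) div 2 \<ge> int s" by simp
  thus ?thesis unfolding Mv_def by simp
qed

lemma Mv_ge1: "s \<ge> 1 \<Longrightarrow> Mv p s \<ge> 1"
  using Mv_ge[of s] by simp

lemma not_dvd2: "\<not> p dvd 2"
proof
  assume "p dvd 2"
  hence "p \<le> 2" by (rule zdvd_imp_le) simp
  thus False using p3 by simp
qed

lemma Mv_diff:
  assumes "2 * \<mu> = (-1::rat)"
  shows "pI p s (of_nat (Mv p s) - \<mu>)"
proof -
  have "of_nat (Mv p s) - \<mu> = of_int (p^s * 1) / of_int 2"
    using Mv_rat[of s] assms by (simp add: field_simps)
  thus ?thesis by (rule pI_intro[OF not_dvd2])
qed

lemma mu_int: assumes "2 * \<mu> = (-1::rat)" shows "pI p 0 \<mu>"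
proof -
  have "\<mu> = of_int (p^0 * (-1)) / of_int 2" using assms by (simp add: field_simps)
  thus ?thesis by (rule pI_intro[OF not_dvd2])
qed

lemma binM_int: "pI p 0 (of_nat (Mv p s) gchoose j)"
  unfolding binomial_gbinomial[symmetric] by (rule pI_nat[OF p])

lemma binM1_int: assumes "s \<ge> 1" shows "pI p 0 ((of_nat (Mv p s) - 1) gchoose j)"
proof -
  have e: "(of_nat (Mv p s) - 1 :: rat) = of_nat (Mv p s - 1)" using Mv_ge1[OF assms] by (simp add: of_nat_diff)
  show ?thesis unfolding e binomial_gbinomial[symmetric] by (rule pI_nat[OF p])
qed

lemma bin_cong:
  assumes mu: "2 * \<mu> = (-1::rat)" and s: "s \<ge> m + fact j"
  shows "pI p m ((of_nat (Mv p s) gchoose j) - (\<mu> gchoose j))"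
    and "pI p m (((of_nat (Mv p s) - 1) gchoose j) - ((\<mu> - 1) gchoose j))"
proof -
  have a: "pI p (s - fact j) ((of_nat (Mv p s) gchoose j) - (\<mu> gchoose j))"
    by (rule binom_diff[OF p mu_int[OF mu] pI_nat[OF p] Mv_diff[OF mu]]) (use s in simp)
  show "pI p m ((of_nat (Mv p s) gchoose j) - (\<mu> gchoose j))"
    by (rule pI_mono[OF _ a]) (use s in simp)
  have b: "pI p (s - fact j) (((of_nat (Mv p s) - 1) gchoose j) - ((\<mu> - 1) gchoose j))"
  proof (rule binom_diff[OF p])
    show "pI p 0 (\<mu> - 1)" using pI_diff[OF p mu_int[OF mu] pI_nat[OF p, of 1]] by simp
    show "pI p 0 (of_nat (Mv p s) - 1)" using pI_diff[OF p pI_nat[OF p] pI_nat[OF p, of 1]] by simp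
    show "pI p s (of_nat (Mv p s) - 1 - (\<mu> - 1))" using Mv_diff[OF mu] by simp
  qed (use s in simp)
  show "pI p m (((of_nat (Mv p s) - 1) gchoose j) - ((\<mu> - 1) gchoose j))"
    by (rule pI_mono[OF _ b]) (use s in simp)
qed

lemma bin_int:
  assumes mu: "2 * \<mu> = (-1::rat)"
  shows "pI p 0 (\<mu> gchoose j)" "pI p 0 ((\<mu> - 1) gchoose j)"
proof -
  let ?s = "fact j :: nat"
  have s1: "?s \<ge> 1" by (simp add: Suc_leI)
  have c1: "pI p 0 ((of_nat (Mv p ?s) gchoose j) - (\<mu> gchoose j))" by (rule bin_cong(1)[OF mu]) simp
  have c2: "pI p 0 (((of_nat (Mv p ?s) - 1) gchoose j) - ((\<mu> - 1) gchoose j))" by (rule bin_cong(2)[OF mu]) simp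
  show "pI p 0 (\<mu> gchoose j)" using pI_diff[OF p binM_int[of "fact j" j] c1] by simp
  show "pI p 0 ((\<mu> - 1) gchoose j)" using pI_diff[OF p binM1_int[OF s1, of j] c2] by simp
qed

end



lemma Zp_intro:
  assumes "\<And>k. f k \<in> {0..<p^k}" "\<And>k. f (Suc k) mod p^k = f k" shows "f \<in> Zp p"
  unfolding Zp_def using assms by blast

lemma Zp_D: "f \<in> Zp p \<Longrightarrow> f k \<in> {0..<p^k}" "f \<in> Zp p \<Longrightarrow> f (Suc k) mod p^k = f k"
  unfolding Zp_def by blast+

lemma pk_dvd: "(p::int)^k dvd p^(Suc k)" by (simp add: le_imp_power_dvd)

lemma pmul_Zp:
  assumes "p > 0" "x \<in> Zp p" "y \<in> Zp p" shows "pmul p x y \<in> Zp p"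
proof (rule Zp_intro)
  fix k
  show "pmul p x y k \<in> {0..<p^k}" using assms(1) by (simp add: pmul_def)
  have "pmul p x y (Suc k) mod p^k = (x (Suc k) * y (Suc k)) mod p^k"
    unfolding pmul_def by (rule mod_mod_cancel[OF pk_dvd])
  also have "\<dots> = ((x (Suc k) mod p^k) * (y (Suc k) mod p^k)) mod p^k" by (simp add: mod_mult_eq)
  also have "\<dots> = pmul p x y k" using Zp_D(2)[OF assms(2)] Zp_D(2)[OF assms(3)] by (simp add: pmul_def)
  finally show "pmul p x y (Suc k) mod p^k = pmul p x y k" .
qed

lemma ppow_Zp:
  assumes "p > 0" "x \<in> Zp p" shows "ppow p x e \<in> Zp p"
proof (rule Zp_intro)
  fix k
  show "ppow p x e k \<in> {0..<p^k}" using assms(1) by (simp add: ppow_def)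
  have "ppow p x e (Suc k) mod p^k = (x (Suc k) ^ e) mod p^k"
    unfolding ppow_def by (rule mod_mod_cancel[OF pk_dvd])
  also have "\<dots> = ((x (Suc k) mod p^k) ^ e) mod p^k" by (simp add: power_mod)
  also have "\<dots> = ppow p x e k" using Zp_D(2)[OF assms(2)] by (simp add: ppow_def)
  finally show "ppow p x e (Suc k) mod p^k = ppow p x e k" .
qed

lemma pprod_Zp:
  assumes "p > 0" "\<forall>i\<in>S. f i \<in> Zp p" shows "pprod p f S \<in> Zp p"
proof (rule Zp_intro)
  fix k
  show "pprod p f S k \<in> {0..<p^k}" using assms(1) by (simp add: pprod_def)
  have "pprod p f S (Suc k) mod p^k = (\<Prod>i\<in>S. f i (Suc k)) mod p^k"
    unfolding pprod_def by (rule mod_mod_cancel[OF pk_dvd])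
  also have "\<dots> = (\<Prod>i\<in>S. f i (Suc k) mod p^k) mod p^k" by (simp add: mod_prod_eq)
  also have "\<dots> = (\<Prod>i\<in>S. f i k) mod p^k" using Zp_D(2) assms(2) by (metis (no_types, lifting) prod.cong)
  also have "\<dots> = pprod p f S k" by (simp add: pprod_def)
  finally show "pprod p f S (Suc k) mod p^k = pprod p f S k" .
qed

lemma pdist_le:
  assumes p1: "p > 1" and eq: "\<forall>m\<le>k. u m = v m"
  shows "pdist p u v \<le> inverse (real_of_int p ^ k)"
proof (cases "u = v")
  case True then show ?thesis using p1 by (simp add: pdist_def)
next
  case False
  then obtain m where m: "u m \<noteq> v m" by blast
  hence "m > k" using eq by (meson not_le)
  then obtain j where j: "m = Suc j" by (cases m) auto
  let ?L = "LEAST j. u (Suc j) \<noteq> v (Suc j)"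
  have L: "u (Suc ?L) \<noteq> v (Suc ?L)" by (rule LeastI[of _ j]) (use m j in simp)
  have "?L \<ge> k"
  proof (rule ccontr)
    assume "\<not> k \<le> ?L"
    hence "Suc ?L \<le> k" by simp
    thus False using eq L by blast
  qed
  hence "real_of_int p ^ k \<le> real_of_int p ^ ?L" using p1 by (intro power_increasing) auto
  moreover have "real_of_int p ^ k > 0" using p1 by simp
  ultimately have "inverse (real_of_int p ^ ?L) \<le> inverse (real_of_int p ^ k)"
    by (rule le_imp_inverse_le)
  thus ?thesis using False by (simp add: pdist_def)
qed

lemma small_exists:
  assumes "p > 1" "(\<epsilon>::real) > 0" shows "\<exists>k. inverse (real_of_int p ^ k) < \<epsilon>"
proof -
  obtain k where k: "inverse \<epsilon> < real_of_int p ^ k" using real_arch_pow[of "real_of_int p" "inverse \<epsilon>"] assms(1) by auto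
  have "inverse (real_of_int p ^ k) < inverse (inverse \<epsilon>)"
    by (rule less_imp_inverse_less[OF k]) (use assms(2) in simp)
  thus ?thesis using assms(2) by auto
qed

lemma gen_conv:
  fixes T :: "'a \<Rightarrow> 'b \<Rightarrow> nat \<Rightarrow> int"
  assumes p1: "p > 1"
   and TZ: "\<forall>a\<in>I. \<forall>x\<in>D. T a x \<in> Zp p"
   and Bfin: "\<forall>m. finite (B m)" and BI: "\<forall>m. B m \<subseteq> I" and Bmono: "\<forall>m k. m \<le> k \<longrightarrow> B m \<subseteq> B k"
   and van: "\<forall>m a x. a \<in> I \<longrightarrow> a \<notin> B m \<longrightarrow> x \<in> D \<longrightarrow> T a x m = 0"
  shows "\<forall>x\<in>D. (\<lambda>m. (\<Sum>a\<in>B m. T a x m) mod p^m) \<in> Zp p"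
   and "unif_series_conv p I T D (\<lambda>x m. (\<Sum>a\<in>B m. T a x m) mod p^m)"
proof -
  have key: "(\<Sum>a\<in>A. T a x m) = (\<Sum>a\<in>B m. T a x m)"
    if "finite A" "B m \<subseteq> A" "A \<subseteq> I" "x \<in> D" for A x m
    by (rule sum.mono_neutral_right[OF that(1,2)]) (use that van in blast)
  show "\<forall>x\<in>D. (\<lambda>m. (\<Sum>a\<in>B m. T a x m) mod p^m) \<in> Zp p"
  proof
    fix x assume x: "x \<in> D"
    show "(\<lambda>m. (\<Sum>a\<in>B m. T a x m) mod p^m) \<in> Zp p"
    proof (rule Zp_intro)
      fix k
      show "(\<Sum>a\<in>B k. T a x k) mod p^k \<in> {0..<p^k}" using p1 by simp
      have "(\<Sum>a\<in>B (Suc k). T a x (Suc k)) mod p^(Suc k) mod p^k = (\<Sum>a\<in>B (Suc k). T a x (Suc k)) mod p^k"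
        by (rule mod_mod_cancel[OF pk_dvd])
      also have "\<dots> = (\<Sum>a\<in>B (Suc k). T a x (Suc k) mod p^k) mod p^k" by (simp add: mod_sum_eq)
      also have "(\<Sum>a\<in>B (Suc k). T a x (Suc k) mod p^k) = (\<Sum>a\<in>B (Suc k). T a x k)"
      proof (rule sum.cong[OF refl])
        fix a assume "a \<in> B (Suc k)"
        hence "a \<in> I" using BI by blast
        hence "T a x \<in> Zp p" using TZ x by blast
        thus "T a x (Suc k) mod p^k = T a x k" by (rule Zp_D(2))
      qed
      also have "B k \<subseteq> B (Suc k)" using Bmono by simp
      hence "(\<Sum>a\<in>B (Suc k). T a x k) = (\<Sum>a\<in>B k. T a x k)"
        by (rule key[OF Bfin[rule_format] _ BI[rule_format] x])
      finally show "(\<Sum>a\<in>B (Suc k). T a x (Suc k)) mod p^(Suc k) mod p^k = (\<Sum>a\<in>B k. T a x k) mod p^k" .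
    qed
  qed
  show "unif_series_conv p I T D (\<lambda>x m. (\<Sum>a\<in>B m. T a x m) mod p^m)"
    unfolding unif_series_conv_def
  proof (intro allI impI)
    fix \<epsilon> :: real assume e: "\<epsilon> > 0"
    obtain k where k: "inverse (real_of_int p ^ k) < \<epsilon>" using small_exists[OF p1 e] by blast
    show "\<exists>A0. finite A0 \<and> A0 \<subseteq> I \<and> (\<forall>A. finite A \<and> A0 \<subseteq> A \<and> A \<subseteq> I \<longrightarrow>
          (\<forall>x\<in>D. pdist p (psum p (\<lambda>a. T a x) A) ((\<lambda>m. (\<Sum>a\<in>B m. T a x m) mod p^m)) < \<epsilon>))"
    proof (intro exI conjI allI impI ballI)
      show "finite (B k)" "B k \<subseteq> I" using Bfin BI by auto
      fix A x assume A: "finite A \<and> B k \<subseteq> A \<and> A \<subseteq> I" and x: "x \<in> D"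
      have "\<forall>m\<le>k. psum p (\<lambda>a. T a x) A m = (\<Sum>a\<in>B m. T a x m) mod p^m"
      proof (intro allI impI)
        fix m assume "m \<le> k"
        hence "B m \<subseteq> A" using A Bmono by blast
        thus "psum p (\<lambda>a. T a x) A m = (\<Sum>a\<in>B m. T a x m) mod p^m"
          unfolding psum_def using key[of A m x] A x by simp
      qed
      from pdist_le[OF p1 this] k
      show "pdist p (psum p (\<lambda>a. T a x) A) (\<lambda>m. (\<Sum>a\<in>B m. T a x m) mod p^m) < \<epsilon>" by simp
    qed
  qed
qed

lemma gen_conv2:
  fixes T :: "'a \<Rightarrow> 'b \<Rightarrow> nat \<Rightarrow> int" and T' :: "nat \<Rightarrow> 'a \<Rightarrow> 'b \<Rightarrow> nat \<Rightarrow> int"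
  assumes p1: "p > 1"
   and Bmono: "\<forall>m k. m \<le> k \<longrightarrow> B m \<subseteq> B k"
   and Jfin: "\<forall>s. finite (J s)"
   and van: "\<forall>s m a x. a \<in> J s \<longrightarrow> a \<notin> B m \<longrightarrow> x \<in> D \<longrightarrow> T' s a x m = 0"
   and agree: "\<forall>k. \<exists>S. \<forall>s\<ge>S. B k \<subseteq> J s \<and> (\<forall>m\<le>k. \<forall>a\<in>B m. \<forall>x\<in>D. T' s a x m = T a x m)"
  shows "\<forall>\<epsilon>>0. \<exists>S. \<forall>s\<ge>S. \<forall>x\<in>D.
     pdist p (psum p (\<lambda>a. T' s a x) (J s)) (\<lambda>m. (\<Sum>a\<in>B m. T a x m) mod p^m) < \<epsilon>"
proof (intro allI impI)
  fix \<epsilon> :: real assume e: "\<epsilon> > 0"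
  obtain k where k: "inverse (real_of_int p ^ k) < \<epsilon>" using small_exists[OF p1 e] by blast
  obtain S where S: "\<forall>s\<ge>S. B k \<subseteq> J s \<and> (\<forall>m\<le>k. \<forall>a\<in>B m. \<forall>x\<in>D. T' s a x m = T a x m)"
    using agree by blast
  show "\<exists>S. \<forall>s\<ge>S. \<forall>x\<in>D. pdist p (psum p (\<lambda>a. T' s a x) (J s)) (\<lambda>m. (\<Sum>a\<in>B m. T a x m) mod p^m) < \<epsilon>"
  proof (intro exI allI impI ballI)
    fix s x assume s: "S \<le> s" and x: "x \<in> D"
    have "\<forall>m\<le>k. psum p (\<lambda>a. T' s a x) (J s) m = (\<Sum>a\<in>B m. T a x m) mod p^m"
    proof (intro allI impI)
      fix m assume mk: "m \<le> k"
      hence sub: "B m \<subseteq> J s" using S s Bmono by blast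
      have "(\<Sum>a\<in>J s. T' s a x m) = (\<Sum>a\<in>B m. T' s a x m)"
        by (rule sum.mono_neutral_right[OF Jfin[rule_format] sub]) (use van x in blast)
      also have "\<dots> = (\<Sum>a\<in>B m. T a x m)" using S s mk x by (intro sum.cong) auto
      finally show "psum p (\<lambda>a. T' s a x) (J s) m = (\<Sum>a\<in>B m. T a x m) mod p^m"
        unfolding psum_def by simp
    qed
    from pdist_le[OF p1 this] k
    show "pdist p (psum p (\<lambda>a. T' s a x) (J s)) (\<lambda>m. (\<Sum>a\<in>B m. T a x m) mod p^m) < \<epsilon>" by simp
  qed
qed




definition degQ :: "nat \<Rightarrow> nat \<Rightarrow> nat \<Rightarrow> (nat \<Rightarrow> nat) \<Rightarrow> nat" where
  "degQ n l j a = (\<Sum>i\<in>{2..n-1}. Qexp n l j a i)"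

lemma nat_le_sum: "i \<in> A \<Longrightarrow> finite A \<Longrightarrow> (f i :: nat) \<le> sum f A"
  by (rule member_le_sum) auto

lemma idx_bound:
  assumes n: "n = 2*g+1" and l: "1 \<le> l" "l \<le> g" and a: "a \<in> Idx n" and q: "Qcond n l j a"
  shows "a i \<le> degQ n l j a + l"
proof -
  define K where "K = n - 2*l"
  have K: "1 \<le> K" "K + 1 \<le> n - 1" using n l unfolding K_def by auto
  have ex1: "a (i' - 1) \<le> Qexp n l j a i'" if "2 \<le> i'" "i' \<le> K" for i'
    using that unfolding Qexp_def K_def by simp
  have ex2: "a i' \<le> Qexp n l j a i'" if "K < i'" "i' \<le> n - 1" for i'
    using that K unfolding Qexp_def K_def by auto
  have sub: "(\<Sum>i'=K+1..n-1. a i') \<le> degQ n l j a"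
  proof -
    have "(\<Sum>i'=K+1..n-1. a i') \<le> (\<Sum>i'=K+1..n-1. Qexp n l j a i')"
      by (rule sum_mono) (use ex2 in auto)
    also have "\<dots> \<le> (\<Sum>i'\<in>{2..n-1}. Qexp n l j a i')"
      by (rule sum_mono2) (use K in auto)
    finally show ?thesis unfolding degQ_def .
  qed
  consider "i = 0 \<or> i > n - 1" | "1 \<le> i \<and> i < K" | "i = K" | "K < i \<and> i \<le> n - 1" by linarith
  then show ?thesis
  proof cases
    case 1
    hence "a i = 0" using a unfolding Idx_def by auto
    thus ?thesis by simp
  next
    case 2
    have "a i \<le> Qexp n l j a (i+1)" using ex1[of "i+1"] 2 by simp
    also have "\<dots> \<le> degQ n l j a" unfolding degQ_def by (rule nat_le_sum) (use 2 K in auto)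
    finally show ?thesis by simp
  next
    case 3
    have "a i \<le> (\<Sum>i'=1..K. a i')" by (rule nat_le_sum) (use 3 K in auto)
    also have "\<dots> = (\<Sum>i'=K+1..n-1. a i') + (if j \<le> K then l - 1 else l)"
      using q unfolding Qcond_def K_def by simp
    also have "\<dots> \<le> degQ n l j a + l" using sub by (cases "j \<le> K") auto
    finally show ?thesis .
  next
    case 4
    have "a i \<le> Qexp n l j a i" using ex2 4 by simp
    also have "\<dots> \<le> degQ n l j a" unfolding degQ_def by (rule nat_le_sum) (use 4 K in auto)
    finally show ?thesis by simp
  qed
qed

lemma IdxB_finite: "finite (IdxB n M)"
proof -
  have "IdxB n M \<subseteq> {f. \<forall>x. (x \<in> {1..n-1} \<longrightarrow> f x \<in> {0..M}) \<and> (x \<notin> {1..n-1} \<longrightarrow> f x = 0)}"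
    unfolding IdxB_def Idx_def by auto
  moreover have "finite {f. \<forall>x. (x \<in> {1..n-1} \<longrightarrow> f x \<in> {0..M}) \<and> (x \<notin> {1..n-1} \<longrightarrow> f x = (0::nat))}"
    by (rule finite_set_of_finite_funs) auto
  ultimately show ?thesis by (rule finite_subset)
qed

definition Bset :: "nat \<Rightarrow> nat \<Rightarrow> nat \<Rightarrow> nat \<Rightarrow> (nat \<Rightarrow> nat) set" where
  "Bset n l j m = {a \<in> Idx n. Qcond n l j a \<and> degQ n l j a < m}"

lemma Bset_sub:
  assumes n: "n = 2*g+1" and l: "1 \<le> l" "l \<le> g" and M: "m + l \<le> M"
  shows "Bset n l j m \<subseteq> IdxB n M"
proof
  fix a assume "a \<in> Bset n l j m"
  hence a: "a \<in> Idx n" "Qcond n l j a" "degQ n l j a < m" unfolding Bset_def by auto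
  have "\<forall>i. a i \<le> M" using idx_bound[OF n l a(1,2)] a(3) M by (metis add_le_mono1 le_trans less_imp_le)
  thus "a \<in> IdxB n M" using a unfolding IdxB_def by auto
qed

lemma Bset_finite:
  assumes n: "n = 2*g+1" and l: "1 \<le> l" "l \<le> g"
  shows "finite (Bset n l j m)"
  using Bset_sub[OF n l order_refl] IdxB_finite finite_subset by blast

lemma Bset_mono: "m \<le> k \<Longrightarrow> Bset n l j m \<subseteq> Bset n l j k"
  unfolding Bset_def by auto

lemma Bset_Idx: "Bset n l j m \<subseteq> Idx n"
  unfolding Bset_def by auto




lemma pI_mult_diff:
  assumes p: "prime p" and h: "pI p 0 x" "pI p 0 y'" "pI p m (x' - x)" "pI p m (y' - y)"
  shows "pI p m (x' * y' - x * y)"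
proof -
  have e: "x' * y' - x * y = (x' - x) * y' + x * (y' - y)" by (simp add: algebra_simps)
  have "pI p (m+0) ((x' - x) * y')" by (rule pI_mult[OF p h(3) h(2)])
  moreover have "pI p (0+m) (x * (y' - y))" by (rule pI_mult[OF p h(1) h(4)])
  ultimately show ?thesis unfolding e using pI_add[OF p] by simp
qed

lemma Qcoef_int:
  assumes p: "prime p" and b: "\<forall>k. pI p 0 (\<mu> gchoose k) \<and> pI p 0 ((\<mu> - 1) gchoose k)"
  shows "pI p 0 (Qcoef n l \<mu> j a)"
proof -
  have P1: "pI p 0 (\<Prod>i\<in>{1..n-1} - {j}. \<mu> gchoose a i)" by (rule pI_prod[OF p]) (use b in auto)
  have P2: "pI p 0 (\<Prod>i\<in>{1..n-1}. \<mu> gchoose a i)" by (rule pI_prod[OF p]) (use b in auto)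
  have P3: "pI p (0+0) (((\<mu> - 1) gchoose a j) * (\<Prod>i\<in>{1..n-1} - {j}. \<mu> gchoose a i))"
    by (rule pI_mult[OF p _ P1]) (use b in auto)
  show ?thesis unfolding Qcoef_def using P2 P3 pI_0[OF p] by simp
qed

context
  fixes p :: int
  assumes p: "prime p" and odd: "odd p"
begin

lemma Qcoef_cong:
  assumes mu: "2 * \<mu> = (-1::rat)" and s: "s \<ge> m + fact N" and aN: "\<forall>i. a i \<le> N"
  shows "pI p m (Qcoef n l (of_nat (Mv p s)) j a - Qcoef n l \<mu> j a)"
proof -
  let ?m' = "of_nat (Mv p s) :: rat"
  have sk: "s \<ge> m + fact (a i)" for i using s fact_mono[OF aN[rule_format, of i], where 'a=nat] by linarith
  have c1: "pI p m ((?m' gchoose a i) - (\<mu> gchoose a i))" for i using bin_cong(1)[OF p odd mu sk] .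
  have c2: "pI p m (((?m' - 1) gchoose a i) - ((\<mu> - 1) gchoose a i))" for i using bin_cong(2)[OF p odd mu sk] .
  have s1: "s \<ge> 1" using s by (metis add_leE fact_ge_1 le_trans)
  have i1: "pI p 0 (?m' gchoose k)" "pI p 0 ((?m' - 1) gchoose k)" for k
    using binM_int[OF p odd] binM1_int[OF p odd s1] by auto
  have i2: "pI p 0 (\<mu> gchoose k)" "pI p 0 ((\<mu> - 1) gchoose k)" for k
    using bin_int[OF p odd mu] by auto
  have D1: "pI p m ((\<Prod>i\<in>S. ?m' gchoose a i) - (\<Prod>i\<in>S. \<mu> gchoose a i))" if "finite S" for S
    by (rule pI_prod_diff[OF p that]) (use i1 i2 c1 in auto)
  have P1: "pI p 0 (\<Prod>i\<in>{1..n-1} - {j}. \<mu> gchoose a i)" by (rule pI_prod[OF p]) (use i2 in auto)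
  have D2: "pI p m (((?m' - 1) gchoose a j) * (\<Prod>i\<in>{1..n-1} - {j}. ?m' gchoose a i)
      - ((\<mu> - 1) gchoose a j) * (\<Prod>i\<in>{1..n-1} - {j}. \<mu> gchoose a i))"
  proof (rule pI_mult_diff[OF p i2(2)])
    show "pI p 0 (\<Prod>i\<in>{1..n-1} - {j}. ?m' gchoose a i)" by (rule pI_prod[OF p]) (use i1 in auto)
    show "pI p m (((?m' - 1) gchoose a j) - ((\<mu> - 1) gchoose a j))" by (rule c2)
    show "pI p m ((\<Prod>i\<in>{1..n-1} - {j}. ?m' gchoose a i) - (\<Prod>i\<in>{1..n-1} - {j}. \<mu> gchoose a i))"
      by (rule D1) simp
  qed
  show ?thesis unfolding Qcoef_def using D1[of "{1..n-1}"] D2 pI_0[OF p] by simp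
qed

lemma Dpoly_Zp: "x \<in> Dpoly p n \<Longrightarrow> i \<in> {2..n-1} \<Longrightarrow> x i \<in> Zp p"
  unfolding Dpoly_def by blast

lemma pabs_one:
  assumes y: "y \<in> Zp p" and a: "pabs p y < 1" shows "y 1 = 0"
proof -
  have p1: "p > 1" using prime_gt1[OF p] .
  have z: "pint p 0 = (\<lambda>k. 0)" unfolding pint_def by simp
  show ?thesis
  proof (cases "y = (\<lambda>k. 0)")
    case True then show ?thesis by simp
  next
    case False
    let ?L = "LEAST k. y (Suc k) \<noteq> 0"
    have "pabs p y = inverse (real_of_int p ^ ?L)"
      unfolding pabs_def pdist_def z using False by simp
    have "?L \<noteq> 0"
    proof
      assume "?L = 0"
      hence "pabs p y = 1" using \<open>pabs p y = _\<close> by simp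
      thus False using a by simp
    qed
    hence "\<not> (y (Suc 0) \<noteq> 0)" by (intro not_less_Least) simp
    thus ?thesis by simp
  qed
qed

lemma Dpoly_dvd:
  assumes x: "x \<in> Dpoly p n" and i: "i \<in> {2..n-1}" shows "p dvd x i m"
proof -
  have Z: "x i \<in> Zp p" using Dpoly_Zp[OF x i] .
  have a: "pabs p (x i) < 1" using x i unfolding Dpoly_def by blast
  have p0: "p > 0" using prime_gt1[OF p] by simp
  show ?thesis
  proof (cases m)
    case 0
    have "x i 0 \<in> {0..<p^0}" using Zp_D(1)[OF Z] .
    hence "x i 0 = 0" by simp
    thus ?thesis using 0 by simp
  next
    case (Suc m')
    have "x i m mod p^1 = x i 1" by (rule Zp_mod[OF p0 Z]) (use Suc in simp)
    thus ?thesis using pabs_one[OF Z a] by (simp add: dvd_eq_mod_eq_0)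
  qed
qed

lemma pprod_zero:
  assumes x: "x \<in> Dpoly p n" and dm: "degQ n l j a \<ge> m"
  shows "pprod p (\<lambda>i. ppow p (x i) (Qexp n l j a i)) {2..n-1} m = 0"
proof -
  let ?e = "Qexp n l j a"
  have "pprod p (\<lambda>i. ppow p (x i) (?e i)) {2..n-1} m = (\<Prod>i\<in>{2..n-1}. x i m ^ ?e i mod p^m) mod p^m"
    unfolding pprod_def ppow_def by simp
  also have "\<dots> = (\<Prod>i\<in>{2..n-1}. x i m ^ ?e i) mod p^m" by (simp add: mod_prod_eq)
  also have "\<dots> = 0"
  proof -
    have "(\<Prod>i\<in>{2..n-1}. p ^ ?e i) dvd (\<Prod>i\<in>{2..n-1}. x i m ^ ?e i)"
      by (rule prod_dvd_prod, rule dvd_power_same, rule Dpoly_dvd[OF x]) simp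
    hence "p ^ degQ n l j a dvd (\<Prod>i\<in>{2..n-1}. x i m ^ ?e i)" unfolding degQ_def power_sum .
    moreover have "p^m dvd p ^ degQ n l j a" by (rule le_imp_power_dvd[OF dm])
    ultimately have "p^m dvd (\<Prod>i\<in>{2..n-1}. x i m ^ ?e i)" by (rule dvd_trans[rotated])
    thus ?thesis by (simp add: dvd_eq_mod_eq_0)
  qed
  finally show ?thesis .
qed

lemma Qterm_van:
  assumes x: "x \<in> Dpoly p n" and c: "\<not> Qcond n l j a \<or> degQ n l j a \<ge> m"
  shows "Qterm p n l \<mu> j x a m = 0"
  using c
proof
  assume "\<not> Qcond n l j a"
  hence "Qcoef n l \<mu> j a = 0" unfolding Qcoef_def by simp
  thus ?thesis unfolding Qterm_def pmul_def using prat_zero[OF p] by simp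
next
  assume "degQ n l j a \<ge> m"
  thus ?thesis unfolding Qterm_def pmul_def using pprod_zero[OF x] by simp
qed

lemma Qterm_Zp:
  assumes x: "x \<in> Dpoly p n" and c: "pI p 0 (Qcoef n l \<mu> j a)"
  shows "Qterm p n l \<mu> j x a \<in> Zp p"
proof -
  have p0: "p > 0" using prime_gt1[OF p] by simp
  show ?thesis unfolding Qterm_def
    by (intro pmul_Zp[OF p0] prat_Zp[OF p c] pprod_Zp[OF p0] ballI ppow_Zp[OF p0] Dpoly_Zp[OF x])
qed

end

theorem proposition10p4:
  fixes p :: int and g l n :: nat
  assumes "prime p" and "odd p" and "g \<ge> 1" and "n = 2*g + 1" and "p > int n"
    and "1 \<le> l" and "l \<le> g"
  shows "(\<forall>j\<in>{1..n}. \<forall>a\<in>Idx n. p_integral p (Qcoef n l (-1/2) j a))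
    \<and> (\<forall>j\<in>{1..n}. \<exists>F.
         (\<forall>x\<in>Dpoly p n. F x \<in> Zp p)
       \<and> unif_series_conv p (Idx n) (\<lambda>a x. Qterm p n l (-1/2) j x a) (Dpoly p n) F
       \<and> (\<forall>\<epsilon>>0. \<exists>S. \<forall>s\<ge>S. s \<ge> 1 \<longrightarrow> (\<forall>x\<in>Dpoly p n.
            pdist p (psum p (Qterm p n l (of_nat (nat ((p^s - 1) div 2))) j x)
                       (IdxB n (nat ((p^s - 1) div 2))))
                    (F x) < \<epsilon>)))"
proof -
  note p = assms(1) and odd = assms(2) and n = assms(4) and l = assms(6,7)
  define \<mu> :: rat where "\<mu> = -1/2"
  have mu: "2 * \<mu> = -1" unfolding \<mu>_def by simp
  have p1: "p > 1" using prime_gt1[OF p] .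
  have bi: "\<forall>k. pI p 0 (\<mu> gchoose k) \<and> pI p 0 ((\<mu> - 1) gchoose k)" using bin_int[OF p odd mu] by blast
  have cint: "pI p 0 (Qcoef n l \<mu> j a)" for j a by (rule Qcoef_int[OF p bi])
  have part1: "\<forall>j\<in>{1..n}. \<forall>a\<in>Idx n. p_integral p (Qcoef n l (-1/2) j a)"
    using cint pI0_iff[OF p] unfolding \<mu>_def by blast
  have part2: "\<exists>F. (\<forall>x\<in>Dpoly p n. F x \<in> Zp p)
       \<and> unif_series_conv p (Idx n) (\<lambda>a x. Qterm p n l \<mu> j x a) (Dpoly p n) F
       \<and> (\<forall>\<epsilon>>0. \<exists>S. \<forall>s\<ge>S. s \<ge> 1 \<longrightarrow> (\<forall>x\<in>Dpoly p n.
            pdist p (psum p (\<lambda>a. Qterm p n l (of_nat (Mv p s)) j x a) (IdxB n (Mv p s))) (F x) < \<epsilon>))"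
    for j
  proof -
    let ?T = "\<lambda>a x. Qterm p n l \<mu> j x a"
    let ?B = "Bset n l j"
    let ?F = "\<lambda>x m. (\<Sum>a\<in>?B m. ?T a x m) mod p^m"
    have TZ: "\<forall>a\<in>Idx n. \<forall>x\<in>Dpoly p n. ?T a x \<in> Zp p"
      using Qterm_Zp[OF p odd _ cint] by blast
    have Bfin: "\<forall>m. finite (?B m)" using Bset_finite[OF n l] by blast
    have BI: "\<forall>m. ?B m \<subseteq> Idx n" using Bset_Idx by blast
    have Bmono: "\<forall>m k. m \<le> k \<longrightarrow> ?B m \<subseteq> ?B k" using Bset_mono by blast
    have van0: "Qterm p n l \<nu> j x a m = 0" if "a \<in> Idx n" "a \<notin> ?B m" "x \<in> Dpoly p n" for \<nu> a x m
    proof (rule Qterm_van[OF p odd that(3)])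
      show "\<not> Qcond n l j a \<or> m \<le> degQ n l j a" using that(1,2) unfolding Bset_def by auto
    qed
    have van: "\<forall>m a x. a \<in> Idx n \<longrightarrow> a \<notin> ?B m \<longrightarrow> x \<in> Dpoly p n \<longrightarrow> ?T a x m = 0"
      using van0 by blast
    note G = gen_conv[OF p1 TZ Bfin BI Bmono van]
    have G2: "\<forall>\<epsilon>>0. \<exists>S. \<forall>s\<ge>S. \<forall>x\<in>Dpoly p n.
      pdist p (psum p (\<lambda>a. Qterm p n l (of_nat (Mv p s)) j x a) (IdxB n (Mv p s))) (?F x) < \<epsilon>"
    proof (rule gen_conv2[OF p1 Bmono])
      show "\<forall>s. finite (IdxB n (Mv p s))" using IdxB_finite by blast
      show "\<forall>s m a x. a \<in> IdxB n (Mv p s) \<longrightarrow> a \<notin> ?B m \<longrightarrow> x \<in> Dpoly p n \<longrightarrow>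
          Qterm p n l (of_nat (Mv p s)) j x a m = 0"
        using van0 unfolding IdxB_def by blast
      show "\<forall>k. \<exists>S. \<forall>s\<ge>S. ?B k \<subseteq> IdxB n (Mv p s) \<and>
          (\<forall>m\<le>k. \<forall>a\<in>?B m. \<forall>x\<in>Dpoly p n. Qterm p n l (of_nat (Mv p s)) j x a m = ?T a x m)"
      proof
        fix k
        show "\<exists>S. \<forall>s\<ge>S. ?B k \<subseteq> IdxB n (Mv p s) \<and>
          (\<forall>m\<le>k. \<forall>a\<in>?B m. \<forall>x\<in>Dpoly p n. Qterm p n l (of_nat (Mv p s)) j x a m = ?T a x m)"
        proof (intro exI allI impI conjI ballI)
          fix s assume s: "k + l + fact (k + l) + 1 \<le> s"
          have "k + l \<le> Mv p s" using Mv_ge[OF p odd, of s] s by linarith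
          thus "?B k \<subseteq> IdxB n (Mv p s)" by (rule Bset_sub[OF n l])
          have s1: "s \<ge> 1" using s by linarith
          fix m a x assume m: "m \<le> k" and a: "a \<in> ?B m" and x: "x \<in> Dpoly p n"
          have a': "a \<in> Idx n" "Qcond n l j a" "degQ n l j a < m" using a unfolding Bset_def by auto
          have aN: "\<forall>i. a i \<le> k + l" using idx_bound[OF n l a'(1,2)] a'(3) m
            by (metis add_le_mono1 le_trans less_imp_le)
          have sN: "s \<ge> m + fact (k + l)" using s m by linarith
          have cong: "pI p m (Qcoef n l (of_nat (Mv p s)) j a - Qcoef n l \<mu> j a)"
            by (rule Qcoef_cong[OF p odd mu sN aN])
          have bM: "\<forall>k. pI p 0 (of_nat (Mv p s) gchoose k) \<and> pI p 0 ((of_nat (Mv p s) - 1) gchoose k)"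
            using binM_int[OF p odd] binM1_int[OF p odd s1] by blast
          have "prat p (Qcoef n l (of_nat (Mv p s)) j a) m = prat p (Qcoef n l \<mu> j a) m"
            by (rule prat_cong[OF p Qcoef_int[OF p bM] cint cong])
          thus "Qterm p n l (of_nat (Mv p s)) j x a m = ?T a x m"
            unfolding Qterm_def pmul_def by simp
        qed
      qed
    qed
    show ?thesis
      by (rule exI[of _ ?F]) (use G G2 in blast)
  qed
  show ?thesis
    using part1 part2 unfolding \<mu>_def Mv_def by blast
qed


end
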